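(* Let $n\ge1$, $1\le d\le n$, and let $\overline{\mathsf{Del}}(n,d)$ be the LP: maximize $\sum_{\mathbf{x}\in\{0,1\}^n}f(\mathbf{x})$ over $f:\{0,1\}^n\to\mathbb{R}$ subject to $f(\mathbf{x})\ge0$ for all $\mathbf{x}$; $\widehat f(\mathbf{s})\ge0$ for all $\mathbf{s}$; $f(\mathbf{x})=0$ whenever $1\le w(\mathbf{x})\le d-1$; and $f(0^n)\le\mathrm{OPT}(\mathsf{Del}(n,d))$. Then every optimal solution of $\overline{\mathsf{Del}}(n,d)$ satisfies $f(0^n)=\mathrm{OPT}(\mathsf{Del}(n,d))$, and $\mathrm{OPT}(\overline{\mathsf{Del}}(n,d))=\big(\mathrm{OPT}(\mathsf{Del}(n,d))\big)^2$.
   Context: Fourier transform: $\widehat{f}(\mathbf{s})=2^{-n}\sum_{\mathbf{x}\in\{0,1\}^n}f(\mathbf{x})(-1)^{\mathbf{x}\cdot\mathbf{s}}$. $w(\mathbf{x})$ is Hamming weight. $\mathrm{OPT}$ denotes the optimal value of an LP. $\mathsf{Del}(n,d)$: maximize $\sum_{\mathbf{x}}f(\mathbf{x})$ over $f:\{0,1\}^n\to\mathbb{R}$ subject to $f\ge0$, $\widehat f\ge0$, $f(\mathbf{x})=0$ whenever $1\le w(\mathbf{x})\le d-1$, $f(0^n)=1$. *)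

theory Defs
  imports Complex_Main
begin

text \<open>Points of the Boolean cube {0,1}^n are bool lists of length n (True = 1).\<close>

definition cube :: "nat \<Rightarrow> bool list set" where
  "cube n = {x. length x = n}"

definition zero_vec :: "nat \<Rightarrow> bool list" where
  "zero_vec n = replicate n False"

definition hweight :: "bool list \<Rightarrow> nat" where
  "hweight x = length (filter id x)"

definition dotp :: "bool list \<Rightarrow> bool list \<Rightarrow> nat" where
  "dotp x s = card {i. i < length x \<and> i < length s \<and> x ! i \<and> s ! i}"

definition fourier :: "nat \<Rightarrow> (bool list \<Rightarrow> real) \<Rightarrow> bool list \<Rightarrow> real" where
  "fourier n f s = (1 / 2 ^ n) * (\<Sum>x\<in>cube n. f x * (-1) ^ dotp x s)"

definition Del_feasible :: "nat \<Rightarrow> nat \<Rightarrow> (bool list \<Rightarrow> real) \<Rightarrow> bool" where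
  "Del_feasible n d f \<longleftrightarrow>
     (\<forall>x\<in>cube n. f x \<ge> 0) \<and> (\<forall>s\<in>cube n. fourier n f s \<ge> 0) \<and>
     (\<forall>x\<in>cube n. 1 \<le> hweight x \<and> hweight x \<le> d - 1 \<longrightarrow> f x = 0) \<and>
     f (zero_vec n) = 1"

definition OPT_Del :: "nat \<Rightarrow> nat \<Rightarrow> real" where
  "OPT_Del n d = Sup {(\<Sum>x\<in>cube n. f x) | f. Del_feasible n d f}"

definition Delbar_feasible :: "nat \<Rightarrow> nat \<Rightarrow> (bool list \<Rightarrow> real) \<Rightarrow> bool" where
  "Delbar_feasible n d f \<longleftrightarrow>
     (\<forall>x\<in>cube n. f x \<ge> 0) \<and> (\<forall>s\<in>cube n. fourier n f s \<ge> 0) \<and>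
     (\<forall>x\<in>cube n. 1 \<le> hweight x \<and> hweight x \<le> d - 1 \<longrightarrow> f x = 0) \<and>
     f (zero_vec n) \<le> OPT_Del n d"

definition OPT_Delbar :: "nat \<Rightarrow> nat \<Rightarrow> real" where
  "OPT_Delbar n d = Sup {(\<Sum>x\<in>cube n. f x) | f. Delbar_feasible n d f}"

definition Delbar_optimal :: "nat \<Rightarrow> nat \<Rightarrow> (bool list \<Rightarrow> real) \<Rightarrow> bool" where
  "Delbar_optimal n d f \<longleftrightarrow>
     Delbar_feasible n d f \<and> (\<forall>g. Delbar_feasible n d g \<longrightarrow> (\<Sum>x\<in>cube n. g x) \<le> (\<Sum>x\<in>cube n. f x))"

end

theory Submission
  imports Defs
begin

lemma cube_0: "cube 0 = {[]}" by (auto simp: cube_def)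

lemma cube_Suc: "cube (Suc n) = (\<lambda>(b,s). b#s) ` (UNIV \<times> cube n)"
proof
  show "cube (Suc n) \<subseteq> (\<lambda>(b,s). b#s) ` (UNIV \<times> cube n)"
  proof
    fix x assume "x \<in> cube (Suc n)"
    then obtain b s where "x = b#s" "length s = n" by (cases x) (auto simp: cube_def)
    then show "x \<in> (\<lambda>(b,s). b#s) ` (UNIV \<times> cube n)" by (auto simp: cube_def)
  qed
qed (auto simp: cube_def)

lemma finite_cube: "finite (cube n)"
  by (induction n) (auto simp: cube_0 cube_Suc)

lemma zero_in_cube: "zero_vec n \<in> cube n" by (simp add: cube_def zero_vec_def)

lemma dotp_zero: "dotp x (zero_vec n) = 0"
  by (auto simp: dotp_def zero_vec_def)

lemma hw_zero: "hweight (zero_vec n) = 0" by (simp add: hweight_def zero_vec_def)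

lemma dotp_zero1: "dotp (zero_vec n) s = 0"
  by (auto simp: dotp_def zero_vec_def)

lemma dotp_Cons: "dotp (a#x) (b#s) = (if a \<and> b then 1 else 0) + dotp x s"
proof -
  let ?A = "{i. i < length x \<and> i < length s \<and> x ! i \<and> s ! i}"
  have eq: "{i. i < length (a#x) \<and> i < length (b#s) \<and> (a#x) ! i \<and> (b#s) ! i}
        = (if a \<and> b then {0} else {}) \<union> Suc ` ?A"
  proof (rule set_eqI)
    fix i show "i \<in> {i. i < length (a#x) \<and> i < length (b#s) \<and> (a#x) ! i \<and> (b#s) ! i}
        \<longleftrightarrow> i \<in> (if a \<and> b then {0} else {}) \<union> Suc ` ?A"
      by (cases i) (auto simp: inj_image_mem_iff)
  qed
  have fin: "finite ?A" by auto
  have "card (Suc ` ?A) = card ?A" by (simp add: card_image)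
  then show ?thesis unfolding dotp_def eq using fin by auto
qed

lemma char_sum:
  "x \<in> cube n \<Longrightarrow> (\<Sum>s\<in>cube n. (-1::real) ^ dotp x s) = (if x = zero_vec n then 2 ^ n else 0)"
proof (induction n arbitrary: x)
  case 0 then show ?case by (simp add: cube_0 zero_vec_def dotp_def)
next
  case (Suc n)
  obtain a y where x: "x = a#y" "y \<in> cube n" using Suc.prems by (cases x) (auto simp: cube_def)
  have inj: "inj_on (\<lambda>p. fst p # snd p) (UNIV \<times> cube n)" by (auto simp: inj_on_def)
  have cs: "cube (Suc n) = (\<lambda>p. fst p # snd p) ` (UNIV \<times> cube n)"
    by (simp add: cube_Suc case_prod_unfold)
  have "(\<Sum>s\<in>cube (Suc n). (-1::real) ^ dotp x s)
      = (\<Sum>p\<in>UNIV \<times> cube n. (-1::real) ^ dotp x (fst p # snd p))"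
    unfolding cs by (simp add: sum.reindex[OF inj] o_def)
  also have "\<dots> = (\<Sum>b\<in>UNIV. \<Sum>s\<in>cube n. (-1::real) ^ dotp x (b # s))"
    by (simp add: sum.cartesian_product case_prod_unfold)
  also have "\<dots> = (\<Sum>s\<in>cube n. (-1::real) ^ dotp y s) * (1 + (if a then -1 else 1))"
    using x by (simp add: UNIV_bool dotp_Cons sum_distrib_left algebra_simps sum.distrib)
  also have "\<dots> = (if x = zero_vec (Suc n) then 2 ^ Suc n else 0)"
    using Suc.IH[OF x(2)] x by (auto simp: zero_vec_def)
  finally show ?case .
qed

lemma fourier_sum:
  "(\<Sum>s\<in>cube n. fourier n f s) = f (zero_vec n)"
proof -
  have "(\<Sum>s\<in>cube n. fourier n f s) = (1/2^n) * (\<Sum>x\<in>cube n. f x * (\<Sum>s\<in>cube n. (-1::real) ^ dotp x s))"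
  proof -
    have "(\<Sum>s\<in>cube n. fourier n f s) = (1/2^n) * (\<Sum>s\<in>cube n. \<Sum>x\<in>cube n. f x * (-1::real) ^ dotp x s)"
      unfolding fourier_def by (rule sum_distrib_left[symmetric])
    also have "(\<Sum>s\<in>cube n. \<Sum>x\<in>cube n. f x * (-1::real) ^ dotp x s) = (\<Sum>x\<in>cube n. \<Sum>s\<in>cube n. f x * (-1::real) ^ dotp x s)"
      by (rule sum.swap)
    also have "\<dots> = (\<Sum>x\<in>cube n. f x * (\<Sum>s\<in>cube n. (-1::real) ^ dotp x s))"
      by (simp add: sum_distrib_left)
    finally show ?thesis .
  qed
  also have "\<dots> = (1/2^n) * (\<Sum>x\<in>cube n. if x = zero_vec n then f x * 2^n else 0)"
    by (auto intro!: sum.cong simp: char_sum)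
  also have "\<dots> = f (zero_vec n)"
    using finite_cube[of n] zero_in_cube[of n] by (simp add: sum.delta)
  finally show ?thesis .
qed

lemma key_bound:
  assumes "\<forall>s\<in>cube n. fourier n f s \<ge> 0"
  shows "(\<Sum>x\<in>cube n. f x) \<le> 2^n * f (zero_vec n)"
proof -
  have "(\<Sum>x\<in>cube n. f x) = 2^n * fourier n f (zero_vec n)"
    by (simp add: fourier_def dotp_zero)
  also have "fourier n f (zero_vec n) \<le> (\<Sum>s\<in>cube n. fourier n f s)"
    using assms finite_cube[of n] zero_in_cube[of n] by (intro member_le_sum) auto
  finally show ?thesis by (simp add: fourier_sum)
qed

lemma fourier_scale: "fourier n (\<lambda>x. k * g x) s = k * fourier n g s"
  by (simp add: fourier_def sum_distrib_left algebra_simps)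

lemma fourier_div: "fourier n (\<lambda>x. g x / k) s = fourier n g s / k"
  using fourier_scale[of n "1/k" g s] by (simp add: field_simps)

lemma fourier_delta: "fourier n (\<lambda>x. if x = zero_vec n then (1::real) else 0) s = 1 / 2^n"
proof -
  have "(\<Sum>x\<in>cube n. (if x = zero_vec n then (1::real) else 0) * (-1) ^ dotp x s)
      = (\<Sum>x\<in>cube n. if x = zero_vec n then (-1) ^ dotp x s else 0)"
    by (intro sum.cong) auto
  also have "\<dots> = 1" using finite_cube[of n] zero_in_cube[of n] by (simp add: dotp_zero1)
  finally show ?thesis by (simp add: fourier_def)
qed

lemma sum_le_scale:
  assumes f: "Delbar_feasible n d f"
    and bd: "\<And>g. Del_feasible n d g \<Longrightarrow> (\<Sum>x\<in>cube n. g x) \<le> A"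
  shows "(\<Sum>x\<in>cube n. f x) \<le> f (zero_vec n) * A"
proof -
  let ?c = "f (zero_vec n)"
  have c0: "?c \<ge> 0" using f zero_in_cube[of n] by (auto simp: Delbar_feasible_def)
  show ?thesis
  proof (cases "?c = 0")
    case True
    then show ?thesis using key_bound[of n f] f by (auto simp: Delbar_feasible_def)
  next
    case False
    then have cp: "?c > 0" using c0 by simp
    have "Del_feasible n d (\<lambda>x. (1/?c) * f x)"
      using f cp unfolding Delbar_feasible_def Del_feasible_def
      by (auto simp: fourier_scale fourier_div)
    from bd[OF this] have "(1/?c) * (\<Sum>x\<in>cube n. f x) \<le> A"
      by (simp add: sum_distrib_left)
    then show ?thesis using cp by (simp add: field_simps)
  qed
qed

theorem mainTheorem5:
  fixes n d :: nat
  assumes "1 \<le> n" and "1 \<le> d" and "d \<le> n"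
  shows "(\<forall>f. Delbar_optimal n d f \<longrightarrow> f (zero_vec n) = OPT_Del n d)
         \<and> OPT_Delbar n d = (OPT_Del n d)\<^sup>2"
proof -
  define S where "S = {(\<Sum>x\<in>cube n. f x) | f. Del_feasible n d f}"
  define A where "A = OPT_Del n d"
  have A_def': "A = Sup S" by (simp add: A_def S_def OPT_Del_def)
  define \<delta> where "\<delta> = (\<lambda>x. if x = zero_vec n then (1::real) else 0)"
  have \<delta>feas: "Del_feasible n d \<delta>"
    unfolding Del_feasible_def \<delta>_def
    using finite_cube[of n] zero_in_cube[of n]
    by (auto simp: fourier_delta hw_zero)
  have \<delta>sum: "(\<Sum>x\<in>cube n. \<delta> x) = 1"
    using finite_cube[of n] zero_in_cube[of n] by (simp add: \<delta>_def sum.delta)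
  have Sbdd: "bdd_above S"
    unfolding S_def bdd_above_def
    by (rule exI[of _ "2^n"]) (auto simp: Del_feasible_def dest!: key_bound)
  have Sne: "S \<noteq> {}" using \<delta>feas S_def by auto
  have up: "\<And>g. Del_feasible n d g \<Longrightarrow> (\<Sum>x\<in>cube n. g x) \<le> A"
    unfolding A_def' by (rule cSup_upper[OF _ Sbdd]) (auto simp: S_def)
  have A1: "1 \<le> A" using up[OF \<delta>feas] \<delta>sum by simp
  have scale_feas: "\<And>g. Del_feasible n d g \<Longrightarrow> Delbar_feasible n d (\<lambda>x. A * g x)"
    using A1 unfolding Delbar_feasible_def Del_feasible_def A_def
    by (auto simp: fourier_scale)
  have feas_bd: "\<And>f. Delbar_feasible n d f \<Longrightarrow> (\<Sum>x\<in>cube n. f x) \<le> A\<^sup>2"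
  proof -
    fix f assume f: "Delbar_feasible n d f"
    have "(\<Sum>x\<in>cube n. f x) \<le> f (zero_vec n) * A" by (rule sum_le_scale[OF f up])
    also have "\<dots> \<le> A * A" using f A1 by (intro mult_right_mono) (auto simp: Delbar_feasible_def A_def)
    finally show "(\<Sum>x\<in>cube n. f x) \<le> A\<^sup>2" by (simp add: power2_eq_square)
  qed
  define T where "T = {(\<Sum>x\<in>cube n. f x) | f. Delbar_feasible n d f}"
  have Tbdd: "bdd_above T" unfolding T_def bdd_above_def using feas_bd by blast
  have Tne: "T \<noteq> {}" using scale_feas[OF \<delta>feas] T_def by auto
  have part2: "OPT_Delbar n d = A\<^sup>2"
  proof (rule antisym)
    show "OPT_Delbar n d \<le> A\<^sup>2"
      unfolding OPT_Delbar_def using Tne feas_bd T_def by (auto intro!: cSup_least)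
  next
    have "\<And>g. Del_feasible n d g \<Longrightarrow> (\<Sum>x\<in>cube n. g x) \<le> OPT_Delbar n d / A"
    proof -
      fix g assume g: "Del_feasible n d g"
      have "(\<Sum>x\<in>cube n. A * g x) \<in> T" using scale_feas[OF g] T_def by blast
      then have "(\<Sum>x\<in>cube n. A * g x) \<le> Sup T" by (rule cSup_upper[OF _ Tbdd])
      moreover have "Sup T = OPT_Delbar n d" by (simp add: OPT_Delbar_def T_def)
      ultimately have "A * (\<Sum>x\<in>cube n. g x) \<le> OPT_Delbar n d"
        by (simp add: sum_distrib_left)
      then show "(\<Sum>x\<in>cube n. g x) \<le> OPT_Delbar n d / A" using A1 by (simp add: field_simps)
    qed
    then have "Sup S \<le> OPT_Delbar n d / A"
      by (intro cSup_least[OF Sne]) (auto simp: S_def)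
    then have "A \<le> OPT_Delbar n d / A" using A_def' by simp
    then show "A\<^sup>2 \<le> OPT_Delbar n d" using A1 by (simp add: field_simps power2_eq_square)
  qed
  have part1: "\<forall>f. Delbar_optimal n d f \<longrightarrow> f (zero_vec n) = A"
  proof (intro allI impI)
    fix f assume fo: "Delbar_optimal n d f"
    have f: "Delbar_feasible n d f" using fo by (simp add: Delbar_optimal_def)
    have "\<And>g. Del_feasible n d g \<Longrightarrow> (\<Sum>x\<in>cube n. g x) \<le> (\<Sum>x\<in>cube n. f x) / A"
    proof -
      fix g assume g: "Del_feasible n d g"
      have "(\<Sum>x\<in>cube n. A * g x) \<le> (\<Sum>x\<in>cube n. f x)"
        using fo scale_feas[OF g] by (simp add: Delbar_optimal_def)
      then show "(\<Sum>x\<in>cube n. g x) \<le> (\<Sum>x\<in>cube n. f x) / A" using A1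
        by (simp add: field_simps sum_distrib_left)
    qed
    then have "Sup S \<le> (\<Sum>x\<in>cube n. f x) / A"
      by (intro cSup_least[OF Sne]) (auto simp: S_def)
    then have "A \<le> (\<Sum>x\<in>cube n. f x) / A" using A_def' by simp
    then have "A * A \<le> (\<Sum>x\<in>cube n. f x)" using A1 by (simp add: field_simps)
    also have "\<dots> \<le> f (zero_vec n) * A" by (rule sum_le_scale[OF f up])
    finally have "A \<le> f (zero_vec n)" using A1 by simp
    moreover have "f (zero_vec n) \<le> A" using f by (simp add: Delbar_feasible_def A_def)
    ultimately show "f (zero_vec n) = A" by simp
  qed
  show ?thesis using part1 part2 by (simp add: A_def)
qed

end
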